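(* Let $\Sigma$ be a finite alphabet. (1) For any $\lambda\in[0,1]$ there is a quantum automaton $\mathcal{A}$ over $\Sigma$ such that $f^{\mathrm{ND}}_{\mathcal{A}}(w)=\lambda$ for all $w\in\Sigma^\omega$. (2) For any quantum automaton $\mathcal{A}$ over $\Sigma$ and $\lambda\in[0,1]$ there is a quantum automaton $\mathcal{B}$ over $\Sigma$ with $f^{\mathrm{ND}}_{\mathcal{B}}(w)=\lambda f^{\mathrm{ND}}_{\mathcal{A}}(w)$ for all $w\in\Sigma^\omega$. (3) For any quantum automaton $\mathcal{A}$ over $\Sigma$ and $\lambda\in[0,1]$ there is a quantum automaton $\mathcal{B}$ over $\Sigma$ with $f^{\mathrm{ND}}_{\mathcal{B}}(w)=\lambda f^{\mathrm{ND}}_{\mathcal{A}}(w)+(1-\lambda)$ for all $w\in\Sigma^\omega$.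
   Context: A quantum automaton is a tuple $\mathcal{A}=(\mathcal{H},|s_0\rangle,\Sigma,\{U_\sigma:\sigma\in\Sigma\},F)$ where $\mathcal{H}$ is a finite-dimensional complex Hilbert space, $|s_0\rangle$ a unit vector, $\Sigma$ a finite alphabet, each $U_\sigma$ unitary, and $F$ a subspace. For $w=\sigma_1\sigma_2\cdots\in\Sigma^\omega$ the non-disturbing run is $|s_n\rangle=U_{\sigma_n}\cdots U_{\sigma_1}|s_0\rangle$ and $f^{\mathrm{ND}}_{\mathcal{A}}(w)=\sup_{|\psi\rangle}\sup_{\{n_i\}}\inf_{i\ge1}|\langle\psi|s_{n_i}\rangle|^2$ over unit $|\psi\rangle\in F$ and strictly increasing sequences $0\le n_1<n_2<\cdots$. *)

theory Defs
  imports "Jordan_Normal_Form.Schur_Decomposition"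
begin

record 'a qaut =
  qa_dim   :: nat
  qa_init  :: "complex vec"
  qa_trans :: "'a \<Rightarrow> complex mat"
  qa_acc   :: "complex vec set"

definition inner :: "complex vec \<Rightarrow> complex vec \<Rightarrow> complex" where
  "inner \<psi> s = (\<Sum>i<dim_vec s. cnj (\<psi> $ i) * s $ i)"

definition unitary_mat :: "nat \<Rightarrow> complex mat \<Rightarrow> bool" where
  "unitary_mat n U \<longleftrightarrow> U \<in> carrier_mat n n \<and> mat_adjoint U * U = 1\<^sub>m n \<and> U * mat_adjoint U = 1\<^sub>m n"

definition is_subspace :: "nat \<Rightarrow> complex vec set \<Rightarrow> bool" where
  "is_subspace n F \<longleftrightarrow> F \<subseteq> carrier_vec n \<and> 0\<^sub>v n \<in> F \<and>
     (\<forall>x\<in>F. \<forall>y\<in>F. x + y \<in> F) \<and> (\<forall>c. \<forall>x\<in>F. c \<cdot>\<^sub>v x \<in> F)"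

definition qaut_wf :: "'a qaut \<Rightarrow> bool" where
  "qaut_wf A \<longleftrightarrow> qa_init A \<in> carrier_vec (qa_dim A) \<and> inner (qa_init A) (qa_init A) = 1 \<and>
     (\<forall>\<sigma>. unitary_mat (qa_dim A) (qa_trans A \<sigma>)) \<and> is_subspace (qa_dim A) (qa_acc A)"

text \<open>Non-disturbing run: s 0 = s0, s (k+1) = U_(w k) s k (letters sigma_1 = w 0, ...).\<close>
fun qa_run :: "'a qaut \<Rightarrow> (nat \<Rightarrow> 'a) \<Rightarrow> nat \<Rightarrow> complex vec" where
  "qa_run A w 0 = qa_init A"
| "qa_run A w (Suc k) = qa_trans A (w k) *\<^sub>v qa_run A w k"

definition fND_set :: "'a qaut \<Rightarrow> (nat \<Rightarrow> 'a) \<Rightarrow> real set" where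
  "fND_set A w = {(INF i::nat. (cmod (inner \<psi> (qa_run A w (ns i))))\<^sup>2) | \<psi> ns.
      \<psi> \<in> qa_acc A \<and> inner \<psi> \<psi> = 1 \<and> strict_mono ns}"

text \<open>Supremum; by convention 0 when F = {0} (no unit vector, empty supremum).\<close>
definition fND :: "'a qaut \<Rightarrow> (nat \<Rightarrow> 'a) \<Rightarrow> real" where
  "fND A w = (if fND_set A w = {} then 0 else Sup (fND_set A w))"

end

theory Submission imports Defs "HOL-Analysis.Convex" "HOL-Analysis.Topology_Euclidean_Space" begin
hide_const (open) Inner_Product.inner
unbundle no vec_syntax
hide_type (open) Finite_Cartesian_Product.vec
hide_const (open) Finite_Cartesian_Product.vec Finite_Cartesian_Product.mat Finite_Cartesian_Product.row Finite_Cartesian_Product.column Finite_Cartesian_Product.transpose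

definition normsq :: "complex vec \<Rightarrow> real" where
  "normsq x = (\<Sum>i<dim_vec x. (cmod (x $ i))\<^sup>2)"

lemma normsq_nonneg: "0 \<le> normsq x"
  unfolding normsq_def by (simp add: sum_nonneg)

lemma inner_self: "inner x x = of_real (normsq x)"
  unfolding inner_def normsq_def of_real_sum
  by (intro sum.cong refl) (metis complex_norm_square of_real_power mult.commute)

lemma inner_CS:
  assumes "dim_vec x = dim_vec y"
  shows "(cmod (inner x y))\<^sup>2 \<le> normsq x * normsq y"
proof -
  have "cmod (inner x y) \<le> (\<Sum>i<dim_vec y. cmod (x $ i) * cmod (y $ i))"
    unfolding inner_def by (rule order_trans[OF norm_sum]) (simp add: norm_mult)
  hence "(cmod (inner x y))\<^sup>2 \<le> (\<Sum>i<dim_vec y. cmod (x $ i) * cmod (y $ i))\<^sup>2"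
    by (simp add: power_mono)
  also have "\<dots> \<le> normsq x * normsq y"
    unfolding normsq_def assms by (rule Cauchy_Schwarz_ineq_sum)
  finally show ?thesis .
qed

lemma inner_smult_left: "dim_vec x = dim_vec y \<Longrightarrow> inner (c \<cdot>\<^sub>v x) y = cnj c * inner x y"
  unfolding inner_def by (simp add: sum_distrib_left mult.assoc)

lemma inner_smult_right: "dim_vec x = dim_vec y \<Longrightarrow> inner x (c \<cdot>\<^sub>v y) = c * inner x y"
  unfolding inner_def by (simp add: sum_distrib_left algebra_simps)

lemma adj_index: "M \<in> carrier_mat n n \<Longrightarrow> i < n \<Longrightarrow> j < n \<Longrightarrow> mat_adjoint M $$ (i,j) = cnj (M $$ (j,i))"
  unfolding mat_adjoint_def by (simp add: mat_of_rows_index)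

lemma adj_carrier: "M \<in> carrier_mat n n \<Longrightarrow> mat_adjoint M \<in> carrier_mat n n"
  unfolding mat_adjoint_def by auto

lemma unitary_preserves:
  assumes U: "unitary_mat n U" and v: "v \<in> carrier_vec n"
  shows "inner (U *\<^sub>v v) (U *\<^sub>v v) = inner v v"
proof -
  have Uc: "U \<in> carrier_mat n n" and UU: "mat_adjoint U * U = 1\<^sub>m n" using U unfolding unitary_mat_def by auto
  have key: "(\<Sum>i<n. cnj (U $$ (i,j)) * U $$ (i,k)) = (if j = k then 1 else 0)" if "j < n" "k < n" for j k
  proof -
    have "(mat_adjoint U * U) $$ (j,k) = (\<Sum>i<n. cnj (U $$ (i,j)) * U $$ (i,k))"
      using that Uc adj_carrier[OF Uc]
      by (simp add: scalar_prod_def adj_index lessThan_atLeast0)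
    thus ?thesis using UU that by simp
  qed
  have "inner (U *\<^sub>v v) (U *\<^sub>v v) = (\<Sum>i<n. cnj (\<Sum>j<n. U $$ (i,j) * v $ j) * (\<Sum>k<n. U $$ (i,k) * v $ k))"
    unfolding inner_def using Uc v by (simp add: scalar_prod_def lessThan_atLeast0)
  also have "\<dots> = (\<Sum>i<n. \<Sum>j<n. \<Sum>k<n. cnj (v $ j) * v $ k * (cnj (U $$ (i,j)) * U $$ (i,k)))"
    by (simp add: sum_distrib_left sum_distrib_right cnj_sum algebra_simps)
  also have "\<dots> = (\<Sum>j<n. \<Sum>i<n. \<Sum>k<n. cnj (v $ j) * v $ k * (cnj (U $$ (i,j)) * U $$ (i,k)))"
    by (rule sum.swap)
  also have "\<dots> = (\<Sum>j<n. \<Sum>k<n. \<Sum>i<n. cnj (v $ j) * v $ k * (cnj (U $$ (i,j)) * U $$ (i,k)))"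
    by (rule sum.cong[OF refl], rule sum.swap)
  also have "\<dots> = (\<Sum>j<n. \<Sum>k<n. cnj (v $ j) * v $ k * (\<Sum>i<n. cnj (U $$ (i,j)) * U $$ (i,k)))"
    by (simp add: sum_distrib_left)
  also have "\<dots> = (\<Sum>j<n. \<Sum>k<n. cnj (v $ j) * v $ k * (if j = k then 1 else 0))"
    by (intro sum.cong refl) (simp add: key)
  also have "\<dots> = inner v v"
    unfolding inner_def using v by (simp add: if_distrib cong: if_cong)
  finally show ?thesis .
qed

definition ext_mat :: "nat \<Rightarrow> complex mat \<Rightarrow> complex mat" where
  "ext_mat n M = mat (Suc n) (Suc n) (\<lambda>(i,j). if i < n \<and> j < n then M $$ (i,j) else if i = j then 1 else 0)"

lemma ext_mat_carrier[simp]: "ext_mat n M \<in> carrier_mat (Suc n) (Suc n)"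
  unfolding ext_mat_def by simp

lemma ext_mat_dims[simp]: "dim_row (ext_mat n M) = Suc n" "dim_col (ext_mat n M) = Suc n"
  unfolding ext_mat_def by simp_all

lemma ext_mat_index: "i < Suc n \<Longrightarrow> j < Suc n \<Longrightarrow>
   ext_mat n M $$ (i,j) = (if i < n \<and> j < n then M $$ (i,j) else if i = j then 1 else 0)"
  unfolding ext_mat_def by simp

lemma ext_mat_adj: assumes "M \<in> carrier_mat n n"
  shows "mat_adjoint (ext_mat n M) = ext_mat n (mat_adjoint M)"
proof (rule eq_matI)
  show "dim_row (mat_adjoint (ext_mat n M)) = dim_row (ext_mat n (mat_adjoint M))"
    using adj_carrier[OF ext_mat_carrier[of n M]] by simp
  show "dim_col (mat_adjoint (ext_mat n M)) = dim_col (ext_mat n (mat_adjoint M))"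
    using adj_carrier[OF ext_mat_carrier[of n M]] by simp
  fix i j assume "i < dim_row (ext_mat n (mat_adjoint M))" "j < dim_col (ext_mat n (mat_adjoint M))"
  hence ij: "i < Suc n" "j < Suc n" by simp_all
  show "mat_adjoint (ext_mat n M) $$ (i, j) = ext_mat n (mat_adjoint M) $$ (i, j)"
    using adj_index[OF ext_mat_carrier ij] ij assms by (auto simp: adj_index ext_mat_index)
qed

lemma ext_mat_mult: assumes X: "X \<in> carrier_mat n n" and Y: "Y \<in> carrier_mat n n"
  shows "ext_mat n X * ext_mat n Y = ext_mat n (X * Y)"
proof (rule eq_matI)
  fix i j assume "i < dim_row (ext_mat n (X * Y))" "j < dim_col (ext_mat n (X * Y))"
  hence i: "i < Suc n" and j: "j < Suc n" by simp_all
  have "(ext_mat n X * ext_mat n Y) $$ (i,j) = (\<Sum>k<Suc n. ext_mat n X $$ (i,k) * ext_mat n Y $$ (k,j))"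
    using i j by (simp add: scalar_prod_def lessThan_atLeast0)
  also have "\<dots> = (\<Sum>k<n. ext_mat n X $$ (i,k) * ext_mat n Y $$ (k,j)) + ext_mat n X $$ (i,n) * ext_mat n Y $$ (n,j)"
    by simp
  also have "\<dots> = ext_mat n (X * Y) $$ (i, j)"
  proof (cases "i < n")
    case True
    show ?thesis
    proof (cases "j < n")
      case True
      have "(\<Sum>k<n. ext_mat n X $$ (i,k) * ext_mat n Y $$ (k,j)) = (\<Sum>k<n. X $$ (i,k) * Y $$ (k,j))"
        using \<open>i < n\<close> True by (intro sum.cong refl) (simp add: ext_mat_index)
      thus ?thesis using \<open>i < n\<close> True X Y
        by (simp add: ext_mat_index scalar_prod_def lessThan_atLeast0)
    next
      case False
      hence "j = n" using j by simp
      thus ?thesis using \<open>i < n\<close> by (simp add: ext_mat_index)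
    qed
  next
    case False
    hence "i = n" using i by simp
    thus ?thesis using j by (simp add: ext_mat_index)
  qed
  finally show "(ext_mat n X * ext_mat n Y) $$ (i, j) = ext_mat n (X * Y) $$ (i, j)" .
qed simp_all

lemma ext_mat_one: "ext_mat n (1\<^sub>m n) = 1\<^sub>m (Suc n)"
  by (rule eq_matI) (auto simp: ext_mat_index)

lemma unitary_ext: assumes "unitary_mat n M" shows "unitary_mat (Suc n) (ext_mat n M)"
proof -
  have M: "M \<in> carrier_mat n n" using assms unfolding unitary_mat_def by auto
  show ?thesis using assms unfolding unitary_mat_def
    using ext_mat_adj[OF M] ext_mat_mult[OF adj_carrier[OF M] M] ext_mat_mult[OF M adj_carrier[OF M]]
      ext_mat_one[of n] by auto
qed

definition ext_vec :: "nat \<Rightarrow> real \<Rightarrow> complex vec \<Rightarrow> complex vec" where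
  "ext_vec n l v = vec (Suc n) (\<lambda>i. if i < n then of_real (sqrt l) * v $ i else of_real (sqrt (1 - l)))"

lemma ext_vec_carrier[simp]: "ext_vec n l v \<in> carrier_vec (Suc n)" "dim_vec (ext_vec n l v) = Suc n"
  unfolding ext_vec_def by simp_all

lemma ext_mat_mult_vec: assumes M: "M \<in> carrier_mat n n" and v: "v \<in> carrier_vec n"
  shows "ext_mat n M *\<^sub>v ext_vec n l v = ext_vec n l (M *\<^sub>v v)"
proof (rule eq_vecI)
  fix i assume "i < dim_vec (ext_vec n l (M *\<^sub>v v))"
  hence i: "i < Suc n" by simp
  have "(ext_mat n M *\<^sub>v ext_vec n l v) $ i = (\<Sum>k<Suc n. ext_mat n M $$ (i,k) * ext_vec n l v $ k)"
    using i by (simp add: scalar_prod_def lessThan_atLeast0)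
  also have "\<dots> = (\<Sum>k<n. ext_mat n M $$ (i,k) * ext_vec n l v $ k) + ext_mat n M $$ (i,n) * ext_vec n l v $ n"
    by simp
  also have "\<dots> = ext_vec n l (M *\<^sub>v v) $ i"
  proof (cases "i < n")
    case True
    have "(\<Sum>k<n. ext_mat n M $$ (i,k) * ext_vec n l v $ k) = (\<Sum>k<n. of_real (sqrt l) * (M $$ (i,k) * v $ k))"
      using True by (intro sum.cong refl) (simp add: ext_mat_index ext_vec_def)
    thus ?thesis using True M v
      by (simp add: ext_mat_index ext_vec_def scalar_prod_def lessThan_atLeast0 sum_distrib_left)
  next
    case False
    hence "i = n" using i by simp
    thus ?thesis by (simp add: ext_mat_index ext_vec_def)
  qed
  finally show "(ext_mat n M *\<^sub>v ext_vec n l v) $ i = ext_vec n l (M *\<^sub>v v) $ i" .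
qed simp

definition trunc :: "nat \<Rightarrow> complex vec \<Rightarrow> complex vec" where
  "trunc n x = vec n (\<lambda>i. x $ i)"

lemma trunc_carrier[simp]: "trunc n x \<in> carrier_vec n" "dim_vec (trunc n x) = n"
  unfolding trunc_def by simp_all

lemma inner_ext: "dim_vec x = Suc n \<Longrightarrow> s \<in> carrier_vec n \<Longrightarrow>
  inner x (ext_vec n l s) = of_real (sqrt l) * inner (trunc n x) s + cnj (x $ n) * of_real (sqrt (1-l))"
  unfolding inner_def by (simp add: ext_vec_def trunc_def sum_distrib_left algebra_simps)

lemma normsq_split: "dim_vec x = Suc n \<Longrightarrow> normsq x = normsq (trunc n x) + (cmod (x $ n))\<^sup>2"
  unfolding normsq_def by (simp add: trunc_def)

lemma normsq_ext: assumes "v \<in> carrier_vec n" "0 \<le> l" "l \<le> 1"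
  shows "normsq (ext_vec n l v) = l * normsq v + (1 - l)"
proof -
  have "normsq (ext_vec n l v) = (\<Sum>i<n. l * (cmod (v $ i))\<^sup>2) + (1 - l)"
    unfolding normsq_def using assms by (simp add: ext_vec_def norm_mult power_mult_distrib)
  thus ?thesis unfolding normsq_def using assms by (simp add: sum_distrib_left)
qed

lemma wf_parts: assumes "qaut_wf A"
  shows "qa_init A \<in> carrier_vec (qa_dim A)" "normsq (qa_init A) = 1"
    "\<And>\<sigma>. unitary_mat (qa_dim A) (qa_trans A \<sigma>)" "is_subspace (qa_dim A) (qa_acc A)"
  using assms unfolding qaut_wf_def by (auto simp: inner_self)

lemma run_props: assumes "qaut_wf A"
  shows "qa_run A w k \<in> carrier_vec (qa_dim A) \<and> normsq (qa_run A w k) = 1"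
proof (induction k)
  case 0
  then show ?case using wf_parts[OF assms] by simp
next
  case (Suc k)
  have U: "unitary_mat (qa_dim A) (qa_trans A (w k))" using wf_parts[OF assms] by simp
  hence Uc: "qa_trans A (w k) \<in> carrier_mat (qa_dim A) (qa_dim A)" unfolding unitary_mat_def by simp
  have "complex_of_real (normsq (qa_run A w (Suc k))) = of_real (normsq (qa_run A w k))"
    using unitary_preserves[OF U, of "qa_run A w k"] Suc by (simp add: inner_self)
  hence "normsq (qa_run A w (Suc k)) = normsq (qa_run A w k)" using of_real_eq_iff by blast
  then show ?case using Suc Uc by simp
qed

lemma acc_carrier: "qaut_wf A \<Longrightarrow> \<psi> \<in> qa_acc A \<Longrightarrow> \<psi> \<in> carrier_vec (qa_dim A)"
  using wf_parts(4) unfolding is_subspace_def by blast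

lemma val_le1: assumes "qaut_wf A" "\<psi> \<in> qa_acc A" "inner \<psi> \<psi> = 1"
  shows "(cmod (inner \<psi> (qa_run A w k)))\<^sup>2 \<le> 1"
proof -
  have "normsq \<psi> = 1" using assms(3) by (simp add: inner_self)
  moreover have "dim_vec \<psi> = dim_vec (qa_run A w k)"
    using acc_carrier[OF assms(1,2)] run_props[OF assms(1), of w k] by (metis carrier_vecD)
  ultimately show ?thesis using inner_CS[of \<psi> "qa_run A w k"] run_props[OF assms(1)] by simp
qed

lemma fND_set_bounds: assumes "qaut_wf A" "x \<in> fND_set A w" shows "0 \<le> x" "x \<le> 1"
proof -
  obtain \<psi> ns where x: "x = (INF i::nat. (cmod (inner \<psi> (qa_run A w (ns i))))\<^sup>2)"
    and \<psi>: "\<psi> \<in> qa_acc A" "inner \<psi> \<psi> = 1"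
    using assms(2) unfolding fND_set_def by blast
  have bdd: "bdd_below (range (\<lambda>i. (cmod (inner \<psi> (qa_run A w (ns i))))\<^sup>2))"
    by (rule bdd_belowI[of _ 0]) auto
  show "0 \<le> x" unfolding x by (rule cINF_greatest) auto
  have "x \<le> (cmod (inner \<psi> (qa_run A w (ns 0))))\<^sup>2" unfolding x by (rule cINF_lower[OF bdd]) simp
  also have "\<dots> \<le> 1" by (rule val_le1[OF assms(1) \<psi>])
  finally show "x \<le> 1" .
qed

lemma fND_props: assumes "qaut_wf A"
  shows "0 \<le> fND A w" "fND A w \<le> 1" "\<And>x. x \<in> fND_set A w \<Longrightarrow> x \<le> fND A w"
proof -
  have bdd: "bdd_above (fND_set A w)" using fND_set_bounds[OF assms] by (intro bdd_aboveI[of _ 1]) auto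
  show up: "\<And>x. x \<in> fND_set A w \<Longrightarrow> x \<le> fND A w"
    unfolding fND_def using cSup_upper[OF _ bdd] by auto
  show "0 \<le> fND A w"
  proof (cases "fND_set A w = {}")
    case False
    then obtain x where "x \<in> fND_set A w" by blast
    thus ?thesis using up fND_set_bounds[OF assms] by force
  qed (simp add: fND_def)
  show "fND A w \<le> 1" unfolding fND_def using fND_set_bounds[OF assms]
    by (auto intro!: cSup_least)
qed

definition extA :: "'a qaut \<Rightarrow> real \<Rightarrow> complex vec set \<Rightarrow> 'a qaut" where
  "extA A l G = \<lparr>qa_dim = Suc (qa_dim A), qa_init = ext_vec (qa_dim A) l (qa_init A),
     qa_trans = (\<lambda>\<sigma>. ext_mat (qa_dim A) (qa_trans A \<sigma>)), qa_acc = G\<rparr>"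

lemma extA_simps[simp]: "qa_dim (extA A l G) = Suc (qa_dim A)"
  "qa_init (extA A l G) = ext_vec (qa_dim A) l (qa_init A)"
  "qa_trans (extA A l G) = (\<lambda>\<sigma>. ext_mat (qa_dim A) (qa_trans A \<sigma>))"
  "qa_acc (extA A l G) = G"
  unfolding extA_def by simp_all

lemma run_extA: assumes "qaut_wf A"
  shows "qa_run (extA A l G) w k = ext_vec (qa_dim A) l (qa_run A w k)"
proof (induction k)
  case (Suc k)
  have "qa_trans A (w k) \<in> carrier_mat (qa_dim A) (qa_dim A)"
    using wf_parts(3)[OF assms] unfolding unitary_mat_def by simp
  then show ?case using Suc ext_mat_mult_vec run_props[OF assms] by simp
qed simp

lemma extA_wf: assumes "qaut_wf A" "0 \<le> l" "l \<le> 1" "is_subspace (Suc (qa_dim A)) G"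
  shows "qaut_wf (extA A l G)"
  unfolding qaut_wf_def using assms wf_parts[OF assms(1)] unitary_ext
  by (simp add: inner_self normsq_ext)

lemma trunc_add: "x \<in> carrier_vec (Suc n) \<Longrightarrow> y \<in> carrier_vec (Suc n) \<Longrightarrow> trunc n (x + y) = trunc n x + trunc n y"
  unfolding trunc_def by (rule eq_vecI) auto

lemma trunc_smult: "x \<in> carrier_vec (Suc n) \<Longrightarrow> trunc n (c \<cdot>\<^sub>v x) = c \<cdot>\<^sub>v trunc n x"
  unfolding trunc_def by (rule eq_vecI) auto

lemma trunc_zero: "trunc n (0\<^sub>v (Suc n)) = 0\<^sub>v n"
  unfolding trunc_def by (rule eq_vecI) auto

lemma subspace_G2: assumes "is_subspace n F"
  shows "is_subspace (Suc n) {v \<in> carrier_vec (Suc n). trunc n v \<in> F \<and> v $ n = 0}"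
  using assms unfolding is_subspace_def by (auto simp: trunc_add trunc_smult trunc_zero)

lemma subspace_G3: assumes "is_subspace n F"
  shows "is_subspace (Suc n) {v \<in> carrier_vec (Suc n). trunc n v \<in> F}"
  using assms unfolding is_subspace_def by (auto simp: trunc_add trunc_smult trunc_zero)

lemma INF_scale: fixes f :: "nat \<Rightarrow> real" assumes "0 \<le> l" "\<And>i. 0 \<le> f i"
  shows "(INF i::nat. l * f i) = l * (INF i. f i)"
proof (cases "l = 0")
  case True thus ?thesis by simp
next
  case False
  hence l: "0 < l" using assms by simp
  have bdd: "bdd_below (range f)" using assms by (intro bdd_belowI[of _ 0]) auto
  have bdd2: "bdd_below (range (\<lambda>i. l * f i))" using assms by (intro bdd_belowI[of _ 0]) auto
  have 1: "l * (INF i. f i) \<le> (INF i::nat. l * f i)"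
    by (rule cINF_greatest) (auto intro!: mult_left_mono cINF_lower[OF bdd] simp: assms)
  have "(INF i::nat. l * f i) / l \<le> (INF i. f i)"
  proof (rule cINF_greatest)
    fix i
    have "(INF i::nat. l * f i) \<le> l * f i" by (rule cINF_lower[OF bdd2]) simp
    thus "(INF i::nat. l * f i) / l \<le> f i" using l by (simp add: divide_le_eq mult.commute)
  qed simp
  hence "(INF i::nat. l * f i) \<le> l * (INF i. f i)" using l by (simp add: divide_le_eq mult.commute)
  thus ?thesis using 1 by simp
qed

lemma Sup_scale: fixes S :: "real set" assumes "S \<noteq> {}" "bdd_above S" "0 \<le> l"
  shows "Sup ((\<lambda>x. l * x) ` S) = l * Sup S"
proof (cases "l = 0")
  case True
  hence "(\<lambda>x. l * x) ` S = {0}" using assms(1) by auto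
  thus ?thesis using True by simp
next
  case False
  hence l: "0 < l" using assms by simp
  obtain M where M: "\<And>x. x \<in> S \<Longrightarrow> x \<le> M" using assms(2) unfolding bdd_above_def by blast
  have bdd2: "bdd_above ((\<lambda>x. l * x) ` S)"
    using M l by (intro bdd_aboveI[of _ "l * M"]) (auto intro: mult_left_mono)
  have 1: "Sup ((\<lambda>x. l * x) ` S) \<le> l * Sup S"
    using assms l by (auto intro!: cSup_least mult_left_mono cSup_upper)
  have "Sup S \<le> Sup ((\<lambda>x. l * x) ` S) / l"
  proof (rule cSup_least[OF assms(1)])
    fix x assume "x \<in> S"
    hence "l * x \<le> Sup ((\<lambda>x. l * x) ` S)" by (intro cSup_upper[OF _ bdd2]) auto
    thus "x \<le> Sup ((\<lambda>x. l * x) ` S) / l" using l by (simp add: le_divide_eq mult.commute)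
  qed
  hence "l * Sup S \<le> Sup ((\<lambda>x. l * x) ` S)" using l by (simp add: le_divide_eq mult.commute)
  thus ?thesis using 1 by simp
qed

lemma cmod_sqrt_mult_sq: "0 \<le> l \<Longrightarrow> (cmod (of_real (sqrt l) * z))\<^sup>2 = l * (cmod z)\<^sup>2"
  by (simp add: norm_mult power_mult_distrib)

lemma part2: assumes A: "qaut_wf A" and l: "0 \<le> l" "l \<le> 1"
  shows "\<exists>B. qaut_wf B \<and> (\<forall>w. fND B w = l * fND A w)"
proof -
  define n where "n = qa_dim A"
  define G where "G = {v \<in> carrier_vec (Suc n). trunc n v \<in> qa_acc A \<and> v $ n = 0}"
  define B where "B = extA A l G"
  have wfB: "qaut_wf B" unfolding B_def G_def n_def
    by (rule extA_wf[OF A l subspace_G2[OF wf_parts(4)[OF A]]])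
  have val: "(cmod (inner \<psi>' (qa_run B w k)))\<^sup>2 = l * (cmod (inner (trunc n \<psi>') (qa_run A w k)))\<^sup>2"
    if "\<psi>' \<in> G" for \<psi>' w k
  proof -
    have "inner \<psi>' (qa_run B w k) = of_real (sqrt l) * inner (trunc n \<psi>') (qa_run A w k)"
      using that run_props[OF A] unfolding B_def G_def
      by (simp add: run_extA[OF A] inner_ext n_def)
    thus ?thesis using l by (simp add: cmod_sqrt_mult_sq)
  qed
  have unit: "inner \<psi>' \<psi>' = inner (trunc n \<psi>') (trunc n \<psi>')" if "\<psi>' \<in> G" for \<psi>'
  proof -
    have d: "dim_vec \<psi>' = Suc n" and z: "\<psi>' $ n = 0" using that unfolding G_def by (auto simp: carrier_vecD)
    show ?thesis by (simp add: inner_self normsq_split[OF d] z)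
  qed
  have set_eq: "fND_set B w = (\<lambda>x. l * x) ` fND_set A w" for w
  proof
    show "fND_set B w \<subseteq> (\<lambda>x. l * x) ` fND_set A w"
    proof
      fix x assume "x \<in> fND_set B w"
      then obtain \<psi>' ns where x: "x = (INF i::nat. (cmod (inner \<psi>' (qa_run B w (ns i))))\<^sup>2)"
        and \<psi>': "\<psi>' \<in> G" "inner \<psi>' \<psi>' = 1" and ns: "strict_mono ns"
        unfolding fND_set_def B_def by auto
      have "x = l * (INF i::nat. (cmod (inner (trunc n \<psi>') (qa_run A w (ns i))))\<^sup>2)"
        unfolding x val[OF \<psi>'(1)] by (rule INF_scale[OF l(1)]) simp
      moreover have "(INF i::nat. (cmod (inner (trunc n \<psi>') (qa_run A w (ns i))))\<^sup>2) \<in> fND_set A w"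
        unfolding fND_set_def using \<psi>' ns unit[OF \<psi>'(1)] unfolding G_def by auto
      ultimately show "x \<in> (\<lambda>x. l * x) ` fND_set A w" by blast
    qed
    show "(\<lambda>x. l * x) ` fND_set A w \<subseteq> fND_set B w"
    proof
      fix y assume "y \<in> (\<lambda>x. l * x) ` fND_set A w"
      then obtain \<psi> ns where y: "y = l * (INF i::nat. (cmod (inner \<psi> (qa_run A w (ns i))))\<^sup>2)"
        and \<psi>: "\<psi> \<in> qa_acc A" "inner \<psi> \<psi> = 1" and ns: "strict_mono ns"
        unfolding fND_set_def by auto
      have \<psi>c: "\<psi> \<in> carrier_vec n" using acc_carrier[OF A \<psi>(1)] n_def by simp
      define \<psi>' where "\<psi>' = vec (Suc n) (\<lambda>i. if i < n then \<psi> $ i else 0)"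
      have tr: "trunc n \<psi>' = \<psi>" unfolding \<psi>'_def trunc_def using \<psi>c by (intro eq_vecI) auto
      have G: "\<psi>' \<in> G" unfolding G_def using tr \<psi> by (simp add: \<psi>'_def)
      have "y = (INF i::nat. (cmod (inner \<psi>' (qa_run B w (ns i))))\<^sup>2)"
        unfolding y val[OF G] tr by (rule INF_scale[OF l(1), symmetric]) simp
      moreover have "inner \<psi>' \<psi>' = 1" using unit[OF G] tr \<psi> by simp
      ultimately show "y \<in> fND_set B w" unfolding fND_set_def B_def using G ns by auto
    qed
  qed
  have "fND B w = l * fND A w" for w
  proof (cases "fND_set A w = {}")
    case True thus ?thesis using set_eq[of w] by (simp add: fND_def)
  next
    case False
    have bdd: "bdd_above (fND_set A w)" using fND_set_bounds[OF A] by (intro bdd_aboveI[of _ 1]) auto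
    show ?thesis using False set_eq[of w] Sup_scale[OF False bdd l(1)] by (simp add: fND_def)
  qed
  thus ?thesis using wfB by blast
qed

definition trivA :: "'a qaut" where
  "trivA = \<lparr>qa_dim = 1, qa_init = vec 1 (\<lambda>_. 1), qa_trans = (\<lambda>_. 1\<^sub>m 1), qa_acc = carrier_vec 1\<rparr>"

lemma trivA_wf: "qaut_wf trivA"
proof -
  have adj: "mat_adjoint (1\<^sub>m (Suc 0) :: complex mat) = 1\<^sub>m (Suc 0)"
    by (rule eq_matI) (use adj_carrier[OF one_carrier_mat[of "Suc 0"]] in \<open>auto simp: adj_index[OF one_carrier_mat]\<close>)
  show ?thesis unfolding qaut_wf_def trivA_def unitary_mat_def is_subspace_def
    by (simp add: inner_def adj)
qed

lemma trivA_run: "qa_run trivA w k = vec 1 (\<lambda>_. 1)"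
  by (induction k) (auto simp: trivA_def)

lemma trivA_fND: "fND (trivA :: 'a qaut) w = 1"
proof -
  have "fND_set (trivA :: 'a qaut) w = {1}"
  proof
    show "fND_set (trivA :: 'a qaut) w \<subseteq> {1}"
    proof
      fix x assume "x \<in> fND_set (trivA :: 'a qaut) w"
      then obtain \<psi> ns where x: "x = (INF i::nat. (cmod (inner \<psi> (qa_run (trivA :: 'a qaut) w (ns i))))\<^sup>2)"
        and \<psi>: "\<psi> \<in> carrier_vec 1" "inner \<psi> \<psi> = 1"
        unfolding fND_set_def by (auto simp: trivA_def)
      have "inner \<psi> \<psi> = of_real ((cmod (\<psi> $ 0))\<^sup>2)" using \<psi>(1) by (simp add: inner_self normsq_def)
      hence n1: "(cmod (\<psi> $ 0))\<^sup>2 = 1" using \<psi>(2) by (metis of_real_eq_1_iff)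
      have "\<And>i. (cmod (inner \<psi> (qa_run (trivA :: 'a qaut) w (ns i))))\<^sup>2 = 1"
        using n1 by (simp add: trivA_run inner_def)
      thus "x \<in> {1}" unfolding x by simp
    qed
    show "{1} \<subseteq> fND_set (trivA :: 'a qaut) w"
    proof -
      have "(INF i::nat. (cmod (inner (vec 1 (\<lambda>_. 1)) (qa_run (trivA :: 'a qaut) w (id i))))\<^sup>2) = 1"
        by (simp add: trivA_run inner_def)
      moreover have "inner (vec 1 (\<lambda>_. 1)) (vec 1 (\<lambda>_. 1)) = 1" by (simp add: inner_def)
      ultimately show ?thesis unfolding fND_set_def
        by (auto simp: trivA_def intro!: exI[of _ "vec 1 (\<lambda>_. 1)"] exI[of _ id] strict_mono_id)
    qed
  qed
  thus ?thesis by (simp add: fND_def)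
qed

lemma part1: assumes "0 \<le> l" "l \<le> 1" shows "\<exists>A :: 'a qaut. qaut_wf A \<and> (\<forall>w. fND A w = l)"
  using part2[OF trivA_wf assms] trivA_fND by (metis mult.right_neutral)

lemma real_CS2: fixes p q r s :: real shows "(p * q + r * s)\<^sup>2 \<le> (p\<^sup>2 + r\<^sup>2) * (q\<^sup>2 + s\<^sup>2)"
proof -
  have "0 \<le> (p * s - r * q)\<^sup>2" by simp
  thus ?thesis by (simp add: power2_eq_square algebra_simps)
qed

lemma CS2: fixes z c :: complex and a l :: real
  assumes "0 \<le> a" "0 \<le> l" "l \<le> 1" "a + (cmod c)\<^sup>2 = 1"
  shows "(cmod (of_real (sqrt l) * (of_real (sqrt a) * z) + cnj c * of_real (sqrt (1 - l))))\<^sup>2 \<le> l * (cmod z)\<^sup>2 + (1 - l)"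
proof -
  have "cmod (of_real (sqrt l) * (of_real (sqrt a) * z) + cnj c * of_real (sqrt (1 - l)))
      \<le> sqrt a * (sqrt l * cmod z) + cmod c * sqrt (1 - l)"
    using assms by (rule_tac order_trans[OF norm_triangle_ineq]) (simp add: norm_mult)
  hence "(cmod (of_real (sqrt l) * (of_real (sqrt a) * z) + cnj c * of_real (sqrt (1 - l))))\<^sup>2
      \<le> (sqrt a * (sqrt l * cmod z) + cmod c * sqrt (1 - l))\<^sup>2"
    by (rule power_mono) simp
  also have "\<dots> \<le> ((sqrt a)\<^sup>2 + (cmod c)\<^sup>2) * ((sqrt l * cmod z)\<^sup>2 + (sqrt (1 - l))\<^sup>2)"
    by (rule real_CS2)
  also have "\<dots> = l * (cmod z)\<^sup>2 + (1 - l)"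
    using assms by (simp add: power_mult_distrib)
  finally show ?thesis .
qed

lemma part3_lt: assumes A: "qaut_wf A" and l: "0 \<le> l" "l < 1"
  shows "\<exists>B. qaut_wf B \<and> (\<forall>w. fND B w = l * fND A w + (1 - l))"
proof -
  define n where "n = qa_dim A"
  define F where "F = qa_acc A"
  define G where "G = {v \<in> carrier_vec (Suc n). trunc n v \<in> F}"
  define B where "B = extA A l G"
  have accB: "qa_acc B = G" unfolding B_def by simp
  have subF: "is_subspace n F" using wf_parts(4)[OF A] unfolding n_def F_def .
  have wfB: "qaut_wf B" unfolding B_def G_def n_def F_def
    by (rule extA_wf[OF A l(1) _ subspace_G3[OF wf_parts(4)[OF A]]]) (use l in simp)
  have runA: "qa_run A w k \<in> carrier_vec n" "normsq (qa_run A w k) = 1" for w k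
    using run_props[OF A] unfolding n_def by auto
  have innB: "inner \<psi>' (qa_run B w k) = of_real (sqrt l) * inner (trunc n \<psi>') (qa_run A w k)
      + cnj (\<psi>' $ n) * of_real (sqrt (1 - l))" if "\<psi>' \<in> G" for \<psi>' w k
    using that runA unfolding B_def G_def
    by (simp add: run_extA[OF A] inner_ext n_def carrier_vecD)
  have nsplit: "normsq \<psi>' = normsq (trunc n \<psi>') + (cmod (\<psi>' $ n))\<^sup>2" if "\<psi>' \<in> G" for \<psi>'
    using that unfolding G_def by (intro normsq_split) (auto simp: carrier_vecD)
  have Fc: "\<psi> \<in> F \<Longrightarrow> \<psi> \<in> carrier_vec n" for \<psi> using subF unfolding is_subspace_def by blast
  have unitn: "inner \<psi> \<psi> = 1 \<longleftrightarrow> normsq \<psi> = 1" for \<psi>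
    by (simp add: inner_self)
  show ?thesis
  proof (intro exI[of _ B] conjI allI wfB)
    fix w
    let ?SA = "fND_set A w" and ?SB = "fND_set B w" and ?fA = "fND A w"
    note fA = fND_props[OF A, where w=w]
    have U: "x \<le> l * ?fA + (1 - l)" if xB: "x \<in> ?SB" for x
    proof -
      obtain \<psi>' ns where x: "x = (INF i::nat. (cmod (inner \<psi>' (qa_run B w (ns i))))\<^sup>2)"
        and \<psi>': "\<psi>' \<in> G" "inner \<psi>' \<psi>' = 1" and ns: "strict_mono ns"
        using xB accB unfolding fND_set_def by auto
      define \<psi> where "\<psi> = trunc n \<psi>'"
      define c where "c = \<psi>' $ n"
      define a where "a = normsq \<psi>"
      define h where "h = (\<lambda>i::nat. (cmod (inner \<psi>' (qa_run B w (ns i))))\<^sup>2)"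
      have \<psi>F: "\<psi> \<in> F" using \<psi>'(1) unfolding \<psi>_def G_def by simp
      have a1: "a + (cmod c)\<^sup>2 = 1" using nsplit[OF \<psi>'(1)] \<psi>'(2) unfolding a_def \<psi>_def c_def unitn by simp
      have a0: "0 \<le> a" unfolding a_def by (rule normsq_nonneg)
      have hnn: "0 \<le> h i" for i unfolding h_def by simp
      have bddh: "bdd_below (range h)" using hnn by (intro bdd_belowI[of _ 0]) auto
      have xle: "x \<le> h i" for i unfolding x h_def[symmetric] by (rule cINF_lower[OF bddh]) simp
      show ?thesis
      proof (cases "a = 0")
        case True
        have "(cmod (inner \<psi> (qa_run A w k)))\<^sup>2 \<le> 0" for k
          using inner_CS[of \<psi> "qa_run A w k"] runA(2)[of w k] True carrier_vecD[OF runA(1)[of w k]]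
            carrier_vecD[OF Fc[OF \<psi>F]] unfolding a_def by simp
        hence "inner \<psi> (qa_run A w k) = 0" for k by simp
        hence "h 0 = (cmod c)\<^sup>2 * (1 - l)"
          unfolding h_def innB[OF \<psi>'(1)] \<psi>_def[symmetric] c_def[symmetric] using l
          by (simp add: norm_mult power_mult_distrib)
        also have "\<dots> \<le> 1 - l" using a1 True l by simp
        finally show ?thesis using xle[of 0] fA(1) l by (smt (verit) mult_nonneg_nonneg)
      next
        case False
        hence apos: "0 < a" using a0 by simp
        define \<phi> where "\<phi> = complex_of_real (1 / sqrt a) \<cdot>\<^sub>v \<psi>"
        have \<phi>F: "\<phi> \<in> F" using subF \<psi>F unfolding is_subspace_def \<phi>_def by blast
        have dimpsi: "dim_vec \<psi> = n" unfolding \<psi>_def by simp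
        have "inner \<phi> \<phi> = complex_of_real (1 / sqrt a) * (cnj (complex_of_real (1 / sqrt a)) * inner \<psi> \<psi>)"
          unfolding \<phi>_def using dimpsi
          by (simp only: inner_smult_left inner_smult_right index_smult_vec)
        also have "\<dots> = 1" using apos unfolding inner_self a_def[symmetric]
          by (simp flip: of_real_mult)
        finally have \<phi>1: "inner \<phi> \<phi> = 1" .
        have psiz: "inner \<psi> (qa_run A w k) = of_real (sqrt a) * inner \<phi> (qa_run A w k)" for k
          unfolding \<phi>_def using apos dimpsi runA(1)[of w k]
          by (simp add: inner_smult_left carrier_vecD)
        define z where "z = (\<lambda>i. inner \<phi> (qa_run A w (ns i)))"
        have hle: "h i \<le> l * (cmod (z i))\<^sup>2 + (1 - l)" for i
          unfolding h_def innB[OF \<psi>'(1)] \<psi>_def[symmetric] c_def[symmetric] psiz z_def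
          by (rule CS2[OF a0 l(1) _ a1]) (use l in simp)
        define y where "y = (INF i::nat. (cmod (z i))\<^sup>2)"
        have yA: "y \<in> ?SA" unfolding y_def z_def fND_set_def using \<phi>F \<phi>1 ns unfolding F_def by blast
        have "x \<le> l * y + (1 - l)"
        proof (cases "l = 0")
          case True thus ?thesis using xle[of 0] hle[of 0] by simp
        next
          case False
          hence lpos: "0 < l" using l by simp
          have "(x - (1 - l)) / l \<le> y" unfolding y_def
          proof (rule cINF_greatest)
            fix i
            have "x - (1 - l) \<le> l * (cmod (z i))\<^sup>2" using xle[of i] hle[of i] by simp
            thus "(x - (1 - l)) / l \<le> (cmod (z i))\<^sup>2" using lpos by (simp add: divide_le_eq mult.commute)
          qed simp
          thus ?thesis using lpos by (simp add: divide_le_eq mult.commute)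
        qed
        also have "\<dots> \<le> l * ?fA + (1 - l)" using fA(3)[OF yA] l by (simp add: mult_left_mono)
        finally show ?thesis .
      qed
    qed
    have L0: "1 - l \<in> ?SB"
    proof -
      define \<psi>' where "\<psi>' = vec (Suc n) (\<lambda>i. if i < n then 0 else (1::complex))"
      have tr: "trunc n \<psi>' = 0\<^sub>v n" unfolding \<psi>'_def trunc_def by (intro eq_vecI) auto
      have G: "\<psi>' \<in> G" unfolding G_def using tr subF unfolding is_subspace_def by (simp add: \<psi>'_def)
      have nn: "\<psi>' $ n = 1" unfolding \<psi>'_def by simp
      have i0: "inner (0\<^sub>v n) (qa_run A w k) = 0" for k unfolding inner_def using runA(1)[of w k] by (simp add: carrier_vecD)
      have val: "(cmod (inner \<psi>' (qa_run B w k)))\<^sup>2 = 1 - l" for k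
        unfolding innB[OF G] tr nn i0 using l by simp
      have "inner \<psi>' \<psi>' = 1" unfolding unitn nsplit[OF G] tr nn by (simp add: normsq_def)
      moreover have "1 - l = (INF i::nat. (cmod (inner \<psi>' (qa_run B w (id i))))\<^sup>2)"
        unfolding val by simp
      ultimately show ?thesis unfolding fND_set_def accB using G strict_mono_id by blast
    qed
    have L1: "\<exists>x\<in>?SB. l * g + (1 - l) - e \<le> x" if gA: "g \<in> ?SA" and e: "0 < e" for g e
    proof -
      obtain \<phi> ns where g: "g = (INF i::nat. (cmod (inner \<phi> (qa_run A w (ns i))))\<^sup>2)"
        and \<phi>: "\<phi> \<in> F" "inner \<phi> \<phi> = 1" and ns: "strict_mono ns"
        using gA unfolding fND_set_def F_def by auto
      define z where "z = (\<lambda>i. inner \<phi> (qa_run A w (ns i)))"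
      have zle: "(cmod (z i))\<^sup>2 \<le> 1" for i unfolding z_def
        by (rule val_le1[OF A \<phi>(1)[unfolded F_def] \<phi>(2)])
      have zball: "z i \<in> cball 0 1" for i
        using zle[of i] by (simp add: power_le_one_iff abs_le_square_iff)
      obtain L r where L: "L \<in> cball 0 1" and r: "strict_mono r" and lim: "(z \<circ> r) \<longlonglongrightarrow> L"
        using compact_imp_seq_compact[OF compact_cball[of "0::complex" 1]] zball
        unfolding seq_compact_def by meson
      have bddz: "bdd_below (range (\<lambda>i. (cmod (z i))\<^sup>2))" by (intro bdd_belowI[of _ 0]) auto
      have gz: "g = (INF i::nat. (cmod (z i))\<^sup>2)" unfolding g z_def by simp
      have gle: "g \<le> (cmod (z i))\<^sup>2" for i unfolding gz
        by (rule cINF_lower[OF bddz]) simp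
      have lim2: "(\<lambda>j. (cmod (z (r j)))\<^sup>2) \<longlonglongrightarrow> (cmod L)\<^sup>2"
        using lim unfolding comp_def by (intro tendsto_intros)
      have gL: "g \<le> (cmod L)\<^sup>2"
        by (rule LIMSEQ_le_const[OF lim2]) (use gle in blast)
      define N where "N = sqrt (l * (cmod L)\<^sup>2 + (1 - l))"
      have Npos: "0 < N" unfolding N_def using l by (simp add: add_nonneg_pos)
      have N2: "N\<^sup>2 = l * (cmod L)\<^sup>2 + (1 - l)" unfolding N_def using l by simp
      define t where "t = complex_of_real (sqrt l) * L / complex_of_real N"
      define c where "c = complex_of_real (sqrt (1 - l) / N)"
      define \<psi>' where "\<psi>' = vec (Suc n) (\<lambda>i. if i < n then t * \<phi> $ i else c)"
      have \<phi>c: "\<phi> \<in> carrier_vec n" using Fc[OF \<phi>(1)] .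
      have tr: "trunc n \<psi>' = t \<cdot>\<^sub>v \<phi>" unfolding \<psi>'_def trunc_def using \<phi>c by (intro eq_vecI) auto
      have G: "\<psi>' \<in> G" unfolding G_def using tr subF \<phi>(1) unfolding is_subspace_def by (simp add: \<psi>'_def)
      have nn: "\<psi>' $ n = c" unfolding \<psi>'_def by simp
      have "inner (t \<cdot>\<^sub>v \<phi>) (t \<cdot>\<^sub>v \<phi>) = t * (cnj t * inner \<phi> \<phi>)"
        using \<phi>c by (simp only: inner_smult_left inner_smult_right index_smult_vec)
      also have "\<dots> = of_real ((cmod t)\<^sup>2)" using \<phi>(2) by (simp add: complex_norm_square flip: of_real_power)
      finally have "normsq (t \<cdot>\<^sub>v \<phi>) = (cmod t)\<^sup>2" unfolding inner_self using of_real_eq_iff by blast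
      hence "normsq \<psi>' = (cmod t)\<^sup>2 + (cmod c)\<^sup>2" unfolding nsplit[OF G] tr nn by simp
      also have "\<dots> = (l * (cmod L)\<^sup>2 + (1 - l)) / N\<^sup>2"
        unfolding t_def c_def using l Npos by (simp add: norm_mult norm_divide power_mult_distrib power_divide add_divide_distrib)
      also have "\<dots> = 1" using Npos by (simp add: N2[symmetric])
      finally have \<psi>'1: "inner \<psi>' \<psi>' = 1" unfolding unitn .
      define H where "H = (\<lambda>u. (cmod ((complex_of_real l * cnj L * u + complex_of_real (1 - l)) / complex_of_real N))\<^sup>2)"
      have innH: "(cmod (inner \<psi>' (qa_run B w (ns i))))\<^sup>2 = H (z i)" for i
      proof -
        have "inner \<psi>' (qa_run B w (ns i)) = of_real (sqrt l) * (cnj t * z i) + cnj c * of_real (sqrt (1 - l))"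
          unfolding innB[OF G] tr nn z_def using \<phi>c runA(1)[of w "ns i"]
          by (simp add: inner_smult_left carrier_vecD)
        also have "\<dots> = (complex_of_real l * cnj L * z i + complex_of_real (1 - l)) / complex_of_real N"
          unfolding t_def c_def using l Npos
          by (simp add: field_simps flip: of_real_mult) 
        finally show ?thesis unfolding H_def by simp
      qed
      have HL: "H L = N\<^sup>2"
      proof -
        have "complex_of_real l * cnj L * L + complex_of_real (1 - l) = complex_of_real (N\<^sup>2)"
          unfolding N2 by (simp add: complex_norm_square mult.assoc mult.commute[of "cnj L"] flip: of_real_power)
        hence "H L = (cmod (complex_of_real (N\<^sup>2) / complex_of_real N))\<^sup>2" unfolding H_def by simp
        also have "\<dots> = N\<^sup>2" using Npos by (simp add: norm_divide power2_eq_square)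
        finally show ?thesis .
      qed
      have contH: "isCont H u" for u unfolding H_def by (intro continuous_intros) (use Npos in simp)
      have limH: "(\<lambda>j. H (z (r j))) \<longlonglongrightarrow> N\<^sup>2"
        using isCont_tendsto_compose[OF contH lim] HL unfolding comp_def by simp
      have "eventually (\<lambda>j. N\<^sup>2 - e < H (z (r j))) sequentially"
        by (rule order_tendstoD(1)[OF limH]) (use e in simp)
      then obtain J where J: "\<And>j. j \<ge> J \<Longrightarrow> N\<^sup>2 - e < H (z (r j))"
        unfolding eventually_sequentially by blast
      define ns' where "ns' = (\<lambda>j. ns (r (j + J)))"
      have ns': "strict_mono ns'" unfolding ns'_def using ns r
        by (simp add: strict_mono_def)
      define x where "x = (INF j::nat. (cmod (inner \<psi>' (qa_run B w (ns' j))))\<^sup>2)"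
      have xB: "x \<in> ?SB" unfolding x_def fND_set_def accB using G \<psi>'1 ns' by blast
      have "N\<^sup>2 - e \<le> x" unfolding x_def
      proof (rule cINF_greatest)
        fix j
        have "N\<^sup>2 - e < H (z (r (j + J)))" by (rule J) simp
        thus "N\<^sup>2 - e \<le> (cmod (inner \<psi>' (qa_run B w (ns' j))))\<^sup>2"
          unfolding ns'_def innH[of "r (j + J)", folded ns'_def] by simp
      qed simp
      moreover have "l * g + (1 - l) - e \<le> N\<^sup>2 - e" unfolding N2 using gL l by (simp add: mult_left_mono)
      ultimately have "l * g + (1 - l) - e \<le> x" by linarith
      thus ?thesis using xB by blast
    qed
    have bddB: "bdd_above ?SB" using U by (intro bdd_aboveI[of _ "l * ?fA + (1 - l)"]) auto
    have neB: "?SB \<noteq> {}" using L0 by blast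
    have le1: "fND B w \<le> l * ?fA + (1 - l)" unfolding fND_def[of B w] using neB cSup_least[OF neB U] by simp
    have ge0: "1 - l \<le> fND B w" unfolding fND_def[of B w] using neB cSup_upper[OF L0 bddB] by simp
    have ge: "l * ?fA + (1 - l) \<le> fND B w"
    proof (cases "?SA = {} \<or> l = 0")
      case True
      hence "l * ?fA = 0" by (auto simp: fND_def)
      thus ?thesis using ge0 by auto
    next
      case False
      hence neA: "?SA \<noteq> {}" and lpos: "0 < l" using l by auto
      have "Sup ?SA \<le> (fND B w - (1 - l)) / l"
      proof (rule cSup_least[OF neA])
        fix g assume gA: "g \<in> ?SA"
        have "l * g + (1 - l) \<le> fND B w"
        proof (rule field_le_epsilon)
          fix e :: real assume "0 < e"
          then obtain x where "x \<in> ?SB" "l * g + (1 - l) - e \<le> x" using L1[OF gA] by blast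
          moreover have "x \<le> fND B w" unfolding fND_def[of B w] using neB cSup_upper[OF _ bddB] \<open>x \<in> ?SB\<close> by simp
          ultimately show "l * g + (1 - l) \<le> fND B w + e" by simp
        qed
        thus "g \<le> (fND B w - (1 - l)) / l" using lpos by (simp add: le_divide_eq mult.commute)
      qed
      hence "?fA \<le> (fND B w - (1 - l)) / l" using neA by (simp add: fND_def[of A w])
      thus ?thesis using lpos by (simp add: le_divide_eq mult.commute)
    qed
    show "fND B w = l * ?fA + (1 - l)" using le1 ge by simp
  qed
qed

lemma part3: assumes A: "qaut_wf A" and l: "0 \<le> l" "l \<le> 1"
  shows "\<exists>B. qaut_wf B \<and> (\<forall>w. fND B w = l * fND A w + (1 - l))"
proof (cases "l = 1")
  case True thus ?thesis using A by auto
next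
  case False thus ?thesis using part3_lt[OF A l(1)] l(2) by simp
qed

theorem proposition4:
  fixes dummy :: "'a::finite itself"
  shows "(\<forall>l::real. 0 \<le> l \<and> l \<le> 1 \<longrightarrow>
            (\<exists>A :: 'a qaut. qaut_wf A \<and> (\<forall>w. fND A w = l)))
       \<and> (\<forall>(A :: 'a qaut) (l::real). qaut_wf A \<and> 0 \<le> l \<and> l \<le> 1 \<longrightarrow>
            (\<exists>B :: 'a qaut. qaut_wf B \<and> (\<forall>w. fND B w = l * fND A w)))
       \<and> (\<forall>(A :: 'a qaut) (l::real). qaut_wf A \<and> 0 \<le> l \<and> l \<le> 1 \<longrightarrow>
            (\<exists>B :: 'a qaut. qaut_wf B \<and> (\<forall>w. fND B w = l * fND A w + (1 - l))))"
  using part1 part2 part3 by blast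

end
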